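(* Let $\mathrm{B}:2^{<\omega}\times 2^{<\omega}\to\mathbb{N}$ satisfy: (1) $\mathrm{B}(x|y)$ is upper semi-computable uniformly in $x,y$; (2) there is a constant $c$ such that $\mathrm{B}(x|y)\le |x|+c$ for all $x,y\in 2^{<\omega}$; (3) there is a constant $d$, independent of $y$, such that $|\{x : \mathrm{B}(x|y)\le n\}|\le d\cdot 2^n$ for all $y\in 2^{<\omega}$ and $n\in\mathbb{N}$; (4) there is a constant $e$ such that $\mathrm{B}(\langle x,y\rangle|y)\le \mathrm{B}(x|y)+e$ for all $x,y$; (5) for every partial computable function $f:2^{<\omega}\to 2^{<\omega}$ there is a constant $c_f$ such that $\mathrm{B}(f(x)|y)\le \mathrm{B}(x|y)+c_f$ for all $y$ and all $x$ in the domain of $f$. Then there is a constant $c'$ such that $|\mathrm{B}(x|y)-\mathrm{C}(x|y)|\le c'$ for all $x,y\in 2^{<\omega}$.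
   Context: $2^{<\omega}$ is the set of finite binary strings; $|x|$ is the length of $x$; $\langle\cdot,\cdot\rangle$ is a fixed computable pairing function on strings. For a machine $T$, the conditional complexity is $\mathrm{C}_T(x|y)=\min\{|z| : T(\langle z,y\rangle)=x\}$. Fix an optimal machine $\mathbb{U}$ (for every machine $T$ there is $c_T$ with $\mathrm{C}_{\mathbb{U}}(x|y)\le \mathrm{C}_T(x|y)+c_T$ for all $x,y$) and set $\mathrm{C}(x|y)=\mathrm{C}_{\mathbb{U}}(x|y)$. Upper semi-computable uniformly in $x,y$ means the predicate "$\mathrm{B}(x|y)\le k$" is computably enumerable uniformly in $x,y,k$. *)

theory Defs
  imports Main "HOL-Library.Nat_Bijection"
begin

datatype recf =
    Zero
  | Succ
  | Proj nat
  | Comp recf "recf list"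
  | Prec recf recf
  | Minim recf

inductive eval :: "recf \<Rightarrow> nat list \<Rightarrow> nat \<Rightarrow> bool" where
  eval_Zero: "eval Zero xs 0"
| eval_Succ: "eval Succ (x # xs) (Suc x)"
| eval_Proj: "i < length xs \<Longrightarrow> eval (Proj i) xs (xs ! i)"
| eval_Comp: "list_all2 (\<lambda>g w. eval g xs w) gs ws \<Longrightarrow> eval f ws v \<Longrightarrow> eval (Comp f gs) xs v"
| eval_Prec0: "eval f xs v \<Longrightarrow> eval (Prec f g) (0 # xs) v"
| eval_PrecS: "eval (Prec f g) (n # xs) u \<Longrightarrow> eval g (n # u # xs) v
                 \<Longrightarrow> eval (Prec f g) (Suc n # xs) v"
| eval_Minim: "eval f (n # xs) 0 \<Longrightarrow> (\<forall>m<n. \<exists>w. eval f (m # xs) w \<and> w > 0)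
                 \<Longrightarrow> eval (Minim f) xs n"

type_synonym bits = "bool list"

text \<open>Bijective base-2 coding of finite binary strings as natural numbers.\<close>
fun enc :: "bits \<Rightarrow> nat" where
  "enc [] = 0"
| "enc (b # xs) = 2 * enc xs + (if b then 2 else 1)"

definition spair :: "bits \<Rightarrow> bits \<Rightarrow> bits" where
  "spair x y = concat (map (\<lambda>b. [b, b]) x) @ [False, True] @ y"

definition partial_computable :: "(bits \<Rightarrow> bits option) \<Rightarrow> bool" where
  "partial_computable f \<longleftrightarrow>
     (\<exists>p. \<forall>x v. eval p [enc x] v \<longleftrightarrow> (\<exists>z. f x = Some z \<and> v = enc z))"

definition ce :: "nat set \<Rightarrow> bool" where
  "ce A \<longleftrightarrow> (\<exists>p. \<forall>n. n \<in> A \<longleftrightarrow> (\<exists>v. eval p [n] v))"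

text \<open>Upper semi-computability uniformly in x, y: the predicate B(x|y) <= k
  is c.e. uniformly in x, y, k (coded via the computable Cantor pairing).\<close>
definition upper_semicomputable :: "(bits \<Rightarrow> bits \<Rightarrow> nat) \<Rightarrow> bool" where
  "upper_semicomputable B \<longleftrightarrow>
     ce {prod_encode (enc x, prod_encode (enc y, k)) | x y k. B x y \<le> k}"

text \<open>C_T(x|y) = min { |z| : T(<z,y>) = x } (only meaningful when the set is nonempty).\<close>
definition condC :: "(bits \<Rightarrow> bits option) \<Rightarrow> bits \<Rightarrow> bits \<Rightarrow> nat" where
  "condC T x y = (LEAST n. \<exists>z. T (spair z y) = Some x \<and> length z = n)"

text \<open>Optimal machine: a machine U such that for every machine T there is c_T
  with C_U(x|y) <= C_T(x|y) + c_T for all x, y (with C_T(x|y) = infinity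
  when x has no T-description relative to y).\<close>
definition optimal_machine :: "(bits \<Rightarrow> bits option) \<Rightarrow> bool" where
  "optimal_machine U \<longleftrightarrow> partial_computable U \<and>
     (\<forall>T. partial_computable T \<longrightarrow> (\<exists>c::nat. \<forall>x y z. T (spair z y) = Some x \<longrightarrow>
        (\<exists>z'. U (spair z' y) = Some x \<and> length z' \<le> length z + c)))"

end

theory Submission
  imports Defs
begin


definition rf :: "nat \<Rightarrow> recf \<Rightarrow> (nat list \<Rightarrow> nat) \<Rightarrow> bool" where
  "rf k f F \<longleftrightarrow> (\<forall>xs. length xs = k \<longrightarrow> eval f xs (F xs))"

definition cpt :: "nat \<Rightarrow> (nat list \<Rightarrow> nat) \<Rightarrow> bool" where
  "cpt k F \<longleftrightarrow> (\<exists>f. rf k f F)"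

lemma cpt_cong: "cpt k F \<Longrightarrow> (\<And>xs. length xs = k \<Longrightarrow> F xs = G xs) \<Longrightarrow> cpt k G"
  unfolding cpt_def rf_def by metis

lemma cpt_zero: "cpt k (\<lambda>_. 0)"
  unfolding cpt_def rf_def by (auto intro: eval.intros)

lemma cpt_proj: "i < k \<Longrightarrow> cpt k (\<lambda>xs. xs ! i)"
  unfolding cpt_def rf_def by (auto intro: eval.intros)

lemma choose_progs:
  assumes "\<forall>F\<in>set Fs. cpt k F"
  shows "\<exists>gs. list_all2 (\<lambda>g F. rf k g F) gs Fs"
  using assms
proof (induction Fs)
  case Nil then show ?case by auto
next
  case (Cons F Fs)
  then obtain gs where "list_all2 (\<lambda>g F. rf k g F) gs Fs" by auto
  moreover obtain g where "rf k g F" using Cons.prems cpt_def by auto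
  ultimately show ?case by (intro exI[of _ "g # gs"]) auto
qed

lemma cpt_compose:
  assumes "cpt m H" "length Fs = m" "\<forall>F\<in>set Fs. cpt k F"
  shows "cpt k (\<lambda>xs. H (map (\<lambda>F. F xs) Fs))"
proof -
  obtain h where h: "rf m h H" using assms(1) cpt_def by auto
  obtain gs where gs: "list_all2 (\<lambda>g F. rf k g F) gs Fs" using choose_progs assms(3) by blast
  have "eval (Comp h gs) xs (H (map (\<lambda>F. F xs) Fs))" if "length xs = k" for xs
  proof (rule eval_Comp)
    show "list_all2 (\<lambda>g w. eval g xs w) gs (map (\<lambda>F. F xs) Fs)"
      using gs that unfolding rf_def list_all2_map2 by (auto elim: list_all2_mono)
    show "eval h (map (\<lambda>F. F xs) Fs) (H (map (\<lambda>F. F xs) Fs))"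
      using h assms(2) unfolding rf_def by auto
  qed
  then show ?thesis unfolding cpt_def rf_def by blast
qed

lemma cpt_c1: "cpt 1 H \<Longrightarrow> cpt k F \<Longrightarrow> cpt k (\<lambda>xs. H [F xs])"
  using cpt_compose[of 1 H "[F]" k] by auto

lemma cpt_c2: "cpt 2 H \<Longrightarrow> cpt k F \<Longrightarrow> cpt k G \<Longrightarrow> cpt k (\<lambda>xs. H [F xs, G xs])"
  using cpt_compose[of 2 H "[F,G]" k] by auto

lemma cpt_c3: "cpt 3 H \<Longrightarrow> cpt k F \<Longrightarrow> cpt k G \<Longrightarrow> cpt k K \<Longrightarrow> cpt k (\<lambda>xs. H [F xs, G xs, K xs])"
  using cpt_compose[of 3 H "[F,G,K]" k] by (auto simp: numeral_3_eq_3)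

lemma cpt_Suc: "cpt k F \<Longrightarrow> cpt k (\<lambda>xs. Suc (F xs))"
proof -
  assume "cpt k F"
  have "cpt 1 (\<lambda>xs. Suc (xs ! 0))" unfolding cpt_def rf_def
    by (rule exI[of _ Succ]) (auto simp: length_Suc_conv intro: eval.intros)
  from cpt_c1[OF this \<open>cpt k F\<close>] show ?thesis by simp
qed

primrec PR :: "(nat list \<Rightarrow> nat) \<Rightarrow> (nat list \<Rightarrow> nat) \<Rightarrow> nat \<Rightarrow> nat list \<Rightarrow> nat" where
  "PR F G 0 ys = F ys"
| "PR F G (Suc n) ys = G (n # PR F G n ys # ys)"

lemma cpt_prec:
  assumes "cpt k F" "cpt (Suc (Suc k)) G"
  shows "cpt (Suc k) (\<lambda>xs. PR F G (hd xs) (tl xs))"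
proof -
  obtain f g where f: "rf k f F" and g: "rf (Suc (Suc k)) g G" using assms cpt_def by auto
  have "eval (Prec f g) (n # ys) (PR F G n ys)" if "length ys = k" for n ys
    using that
  proof (induction n)
    case 0 then show ?case using f unfolding rf_def by (auto intro: eval.intros)
  next
    case (Suc n) then show ?case using g unfolding rf_def by (auto intro: eval.intros)
  qed
  then show ?thesis unfolding cpt_def rf_def
    by (intro exI[of _ "Prec f g"]) (auto simp: length_Suc_conv)
qed

lemma map_nth_from: "length xs = k \<Longrightarrow> map (\<lambda>i. xs ! i) [a..<k] = drop a xs"
  by (rule nth_equalityI) auto

lemma map_nth_upt: "length xs = k \<Longrightarrow> map (\<lambda>i. xs ! i) [0..<k] = xs"
  using map_nth_from[of xs k 0] by simp

lemma cpt_projs: "\<forall>F\<in>set (map (\<lambda>i xs. xs ! i) [a..<k]). cpt k F"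
  by (auto intro: cpt_proj)

lemma cpt_iter:
  assumes "cpt k F" "cpt (Suc (Suc k)) G" "cpt k N"
  shows "cpt k (\<lambda>xs. PR F G (N xs) xs)"
proof -
  have "cpt k (\<lambda>xs. (\<lambda>zs. PR F G (hd zs) (tl zs)) (map (\<lambda>H. H xs) (N # map (\<lambda>i xs. xs ! i) [0..<k])))"
    by (rule cpt_compose[OF cpt_prec[OF assms(1,2)]]) (use assms(3) cpt_projs in auto)
  then show ?thesis by (rule cpt_cong) (simp only: map_map o_def list.map list.sel map_nth_upt)
qed

lemma map_nth_drop2: "length ys = Suc (Suc k) \<Longrightarrow> map (\<lambda>i. ys ! i) [2..<Suc (Suc k)] = drop 2 ys"
  by (rule map_nth_from)

lemma cpt_drop2: "cpt k F \<Longrightarrow> cpt (Suc (Suc k)) (\<lambda>ys. F (drop 2 ys))"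
proof -
  assume "cpt k F"
  have "cpt (Suc (Suc k)) (\<lambda>ys. F (map (\<lambda>H. H ys) (map (\<lambda>i xs. xs ! i) [2..<Suc (Suc k)])))"
    by (rule cpt_compose[OF \<open>cpt k F\<close>]) (auto intro: cpt_proj)
  then show ?thesis by (rule cpt_cong) (simp only: map_map o_def map_nth_drop2)
qed



lemma cpt_sel:
  assumes "cpt m F" "length is = m" "\<forall>i\<in>set is. i < k"
  shows "cpt k (\<lambda>xs. F (map (\<lambda>i. xs ! i) is))"
proof -
  have "cpt k (\<lambda>xs. F (map (\<lambda>H. H xs) (map (\<lambda>i xs. xs ! i) is)))"
    by (rule cpt_compose[OF assms(1)]) (use assms(2,3) cpt_proj in auto)
  then show ?thesis by (simp add: o_def)
qed

lemma cpt_const: "cpt k (\<lambda>_. c)"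
  by (induction c) (auto intro: cpt_zero cpt_Suc)

lemma PR_add: "PR G (\<lambda>ys. Suc (ys ! 1)) n xs = n + G xs"
  by (induction n) auto

lemma cpt_add: "cpt k F \<Longrightarrow> cpt k G \<Longrightarrow> cpt k (\<lambda>xs. F xs + G xs)"
proof -
  assume a: "cpt k F" "cpt k G"
  have "cpt (Suc (Suc k)) (\<lambda>ys. Suc (ys ! 1))" by (intro cpt_Suc cpt_proj) simp
  from cpt_iter[OF a(2) this a(1)] show ?thesis unfolding PR_add .
qed

lemma PR_pred: "PR (\<lambda>_. 0) (\<lambda>ys. ys ! 0) n xs = n - 1"
  by (induction n) auto

lemma cpt_pred1: "cpt 1 (\<lambda>xs. xs ! 0 - 1)"
proof -
  have "cpt (Suc 0) (\<lambda>xs. PR (\<lambda>_. 0) (\<lambda>ys. ys ! 0) (hd xs) (tl xs))"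
    by (rule cpt_prec) (auto intro: cpt_zero cpt_proj)
  then have "cpt (Suc 0) (\<lambda>xs. xs ! 0 - 1)" by (rule cpt_cong) (auto simp: PR_pred length_Suc_conv)
  then show ?thesis by simp
qed

lemma PR_sub: "PR F (\<lambda>ys. ys ! 1 - 1) n xs = F xs - n"
  by (induction n) auto

lemma cpt_sub: "cpt k F \<Longrightarrow> cpt k G \<Longrightarrow> cpt k (\<lambda>xs. F xs - G xs)"
proof -
  assume a: "cpt k F" "cpt k G"
  have "cpt (Suc (Suc k)) (\<lambda>ys. ys ! 1 - 1)"
    using cpt_c1[OF cpt_pred1 cpt_proj[of 1 "Suc (Suc k)"]] by simp
  from cpt_iter[OF a(1) this a(2)] show ?thesis unfolding PR_sub .
qed

lemma PR_mult: "PR (\<lambda>_. 0) (\<lambda>ys. ys ! 1 + F (drop 2 ys)) n xs = n * F xs"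
  by (induction n) auto

lemma cpt_mult: "cpt k F \<Longrightarrow> cpt k G \<Longrightarrow> cpt k (\<lambda>xs. F xs * G xs)"
proof -
  assume a: "cpt k F" "cpt k G"
  have "cpt (Suc (Suc k)) (\<lambda>ys. ys ! 1 + G (drop 2 ys))"
    by (intro cpt_add cpt_proj cpt_drop2 a) simp
  from cpt_iter[OF cpt_zero this a(1)] show ?thesis unfolding PR_mult .
qed

lemma PR_if: "PR F (\<lambda>ys. G (drop 2 ys)) n xs = (if n = 0 then F xs else G xs)"
  by (cases n) auto

lemma cpt_if: "cpt k C \<Longrightarrow> cpt k F \<Longrightarrow> cpt k G \<Longrightarrow> cpt k (\<lambda>xs. if C xs = 0 then F xs else G xs)"
proof -
  assume a: "cpt k C" "cpt k F" "cpt k G"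
  from cpt_iter[OF a(2) cpt_drop2[OF a(3)] a(1)] show ?thesis unfolding PR_if .
qed

lemma cpt_ifeq: "cpt k A \<Longrightarrow> cpt k A' \<Longrightarrow> cpt k F \<Longrightarrow> cpt k G \<Longrightarrow>
  cpt k (\<lambda>xs. if A xs = A' xs then F xs else G xs)"
proof -
  assume a: "cpt k A" "cpt k A'" "cpt k F" "cpt k G"
  have "cpt k (\<lambda>xs. if (A xs - A' xs) + (A' xs - A xs) = 0 then F xs else G xs)"
    by (intro cpt_if cpt_add cpt_sub a)
  then show ?thesis by (rule cpt_cong) auto
qed

lemma cpt_ifle: "cpt k A \<Longrightarrow> cpt k A' \<Longrightarrow> cpt k F \<Longrightarrow> cpt k G \<Longrightarrow>
  cpt k (\<lambda>xs. if A xs \<le> A' xs then F xs else G xs)"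
proof -
  assume a: "cpt k A" "cpt k A'" "cpt k F" "cpt k G"
  have "cpt k (\<lambda>xs. if A xs - A' xs = 0 then F xs else G xs)"
    by (intro cpt_if cpt_sub a)
  then show ?thesis by (rule cpt_cong) auto
qed

lemma PR_mod2: "PR (\<lambda>_. 0) (\<lambda>ys. 1 - ys ! 1) n xs = n mod 2"
  by (induction n) (auto simp: mod_Suc)

lemma cpt_mod2: "cpt k F \<Longrightarrow> cpt k (\<lambda>xs. F xs mod 2)"
proof -
  assume a: "cpt k F"
  have "cpt (Suc (Suc k)) (\<lambda>ys. 1 - ys ! 1)" by (intro cpt_sub cpt_const cpt_proj) simp
  from cpt_iter[OF cpt_zero this a] show ?thesis unfolding PR_mod2 .
qed

lemma PR_div2: "PR (\<lambda>_. 0) (\<lambda>ys. ys ! 1 + ys ! 0 mod 2) n xs = n div 2"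
  by (induction n) (simp_all, presburger)

lemma cpt_div2: "cpt k F \<Longrightarrow> cpt k (\<lambda>xs. F xs div 2)"
proof -
  assume a: "cpt k F"
  have "cpt (Suc (Suc k)) (\<lambda>ys. ys ! 1 + ys ! 0 mod 2)" by (intro cpt_add cpt_mod2 cpt_proj) simp_all
  from cpt_iter[OF cpt_zero this a] show ?thesis unfolding PR_div2 .
qed

lemma PR_pow2: "PR (\<lambda>_. 1) (\<lambda>ys. ys ! 1 + ys ! 1) n xs = 2 ^ n"
  by (induction n) auto

lemma cpt_pow2: "cpt k F \<Longrightarrow> cpt k (\<lambda>xs. 2 ^ F xs)"
proof -
  assume a: "cpt k F"
  have "cpt (Suc (Suc k)) (\<lambda>ys. ys ! 1 + ys ! 1)" by (intro cpt_add cpt_proj) simp_all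
  from cpt_iter[OF cpt_const[of k 1] this a] show ?thesis unfolding PR_pow2 .
qed

lemma cpt_shift0: "cpt (Suc k) F \<Longrightarrow> cpt (Suc (Suc k)) (\<lambda>ys. F (ys ! 0 # drop 2 ys))"
proof -
  assume a: "cpt (Suc k) F"
  have "cpt (Suc (Suc k)) (\<lambda>ys. F (map (\<lambda>i. ys ! i) (0 # [2..<Suc (Suc k)])))"
    by (rule cpt_sel[OF a]) auto
  then show ?thesis by (rule cpt_cong) (simp del: upt_Suc add: map_nth_from)
qed

lemma PR_sum: "PR (\<lambda>_. 0) (\<lambda>ys. ys ! 1 + F (ys ! 0 # drop 2 ys)) n xs = (\<Sum>i<n. F (i # xs))"
  by (induction n) auto

lemma cpt_sum: "cpt (Suc k) F \<Longrightarrow> cpt k N \<Longrightarrow> cpt k (\<lambda>xs. \<Sum>i<N xs. F (i # xs))"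
proof -
  assume a: "cpt (Suc k) F" "cpt k N"
  have "cpt (Suc (Suc k)) (\<lambda>ys. ys ! 1 + F (ys ! 0 # drop 2 ys))"
    by (intro cpt_add cpt_proj cpt_shift0 a) simp
  from cpt_iter[OF cpt_zero this a(2)] show ?thesis unfolding PR_sum .
qed

primrec bm :: "(nat \<Rightarrow> bool) \<Rightarrow> nat \<Rightarrow> nat" where
  "bm P 0 = 0"
| "bm P (Suc n) = (if bm P n = n \<and> \<not> P n then Suc n else bm P n)"

lemma bm_spec: "bm P n = (if \<exists>j<n. P j then (LEAST j. P j) else n)"
proof (induction n)
  case 0 then show ?case by simp
next
  case (Suc n)
  show ?case
  proof (cases "\<exists>j<n. P j")
    case True
    then have "(LEAST j. P j) < n" by (meson Least_le le_less_trans)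
    with True Suc show ?thesis by (auto simp: less_Suc_eq)
  next
    case False
    have bn: "bm P n = n" by (subst Suc.IH) (simp only: False if_False)
    show ?thesis
    proof (cases "P n")
      case True
      have "(LEAST j. P j) = n"
        by (rule Least_equality) (use True False not_less in blast)+
      then show ?thesis using True bn by auto
    next
      case F2: False
      have "\<not>(\<exists>j<Suc n. P j)" using False F2 less_Suc_eq by auto
      then show ?thesis using bn F2 by (subst if_not_P) simp_all
    qed
  qed
qed

lemma cpt_bm: "cpt (Suc k) Q \<Longrightarrow> cpt k N \<Longrightarrow> cpt k (\<lambda>xs. bm (\<lambda>j. Q (j # xs) \<noteq> 0) (N xs))"
proof -
  assume a: "cpt (Suc k) Q" "cpt k N"
  have s: "cpt (Suc (Suc k)) (\<lambda>ys. if ys ! 1 = ys ! 0 then (if Q (ys ! 0 # drop 2 ys) = 0 then Suc (ys ! 0) else ys ! 1) else ys ! 1)"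
    by (intro cpt_ifeq cpt_if cpt_proj cpt_Suc cpt_shift0 a) simp_all
  have "PR (\<lambda>_. 0) (\<lambda>ys. if ys ! 1 = ys ! 0 then (if Q (ys ! 0 # drop 2 ys) = 0 then Suc (ys ! 0) else ys ! 1) else ys ! 1) n xs
     = bm (\<lambda>j. Q (j # xs) \<noteq> 0) n" for n xs
    by (induction n) auto
  with cpt_iter[OF cpt_zero s a(2)] show ?thesis by simp
qed

lemma cpt_triangle: "cpt k F \<Longrightarrow> cpt k (\<lambda>xs. triangle (F xs))"
proof -
  assume a: "cpt k F"
  have "cpt k (\<lambda>xs. (F xs * Suc (F xs)) div 2)" by (intro cpt_div2 cpt_mult cpt_Suc a)
  then show ?thesis by (simp add: triangle_def)
qed

lemma cpt_pe: "cpt k F \<Longrightarrow> cpt k G \<Longrightarrow> cpt k (\<lambda>xs. prod_encode (F xs, G xs))"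
proof -
  assume a: "cpt k F" "cpt k G"
  have "cpt k (\<lambda>xs. triangle (F xs + G xs) + F xs)" by (intro cpt_add cpt_triangle a)
  then show ?thesis by (simp add: prod_encode_def)
qed

lemma fst_decode: "fst (prod_decode m) = bm (\<lambda>a. (\<Sum>b<Suc m. if prod_encode (a, b) = m then 1 else 0) \<noteq> (0::nat)) (Suc m)"
proof -
  obtain a b where ab: "prod_decode m = (a, b)" by force
  then have m: "m = prod_encode (a, b)" using prod_decode_inverse[of m] by simp
  have P: "(\<Sum>b<Suc m. if prod_encode (a', b) = m then 1 else 0) \<noteq> (0::nat) \<longleftrightarrow> a' = a" for a'
  proof
    assume "(\<Sum>b<Suc m. if prod_encode (a', b) = m then 1 else 0) \<noteq> (0::nat)"
    then obtain b' where "(if prod_encode (a', b') = m then 1 else 0) \<noteq> (0::nat)"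
      using sum.not_neutral_contains_not_neutral by blast
    then have "prod_encode (a', b') = m" by (cases "prod_encode (a', b') = m") auto
    then show "a' = a" using m by simp
  next
    assume "a' = a"
    then have "b < Suc m" using m le_prod_encode_2 by (simp add: le_imp_less_Suc)
    then show "(\<Sum>b<Suc m. if prod_encode (a', b) = m then 1 else 0) \<noteq> (0::nat)"
      using \<open>a' = a\<close> m by (subst sum.remove[of _ b]) auto
  qed
  have "a < Suc m" using m le_prod_encode_1 by (simp add: le_imp_less_Suc)
  then show ?thesis unfolding bm_spec P using ab by (auto intro: Least_equality[symmetric])
qed

lemma snd_decode: "snd (prod_decode m) = bm (\<lambda>b. (\<Sum>a<Suc m. if prod_encode (a, b) = m then 1 else 0) \<noteq> (0::nat)) (Suc m)"
proof -
  obtain a b where ab: "prod_decode m = (a, b)" by force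
  then have m: "m = prod_encode (a, b)" using prod_decode_inverse[of m] by simp
  have P: "(\<Sum>a<Suc m. if prod_encode (a, b') = m then 1 else 0) \<noteq> (0::nat) \<longleftrightarrow> b' = b" for b'
  proof
    assume "(\<Sum>a<Suc m. if prod_encode (a, b') = m then 1 else 0) \<noteq> (0::nat)"
    then obtain a' where "(if prod_encode (a', b') = m then 1 else 0) \<noteq> (0::nat)"
      using sum.not_neutral_contains_not_neutral by blast
    then have "prod_encode (a', b') = m" by (cases "prod_encode (a', b') = m") auto
    then show "b' = b" using m by simp
  next
    assume "b' = b"
    then have "a < Suc m" using m le_prod_encode_1 by (simp add: le_imp_less_Suc)
    then show "(\<Sum>a<Suc m. if prod_encode (a, b') = m then 1 else 0) \<noteq> (0::nat)"
      using \<open>b' = b\<close> m by (subst sum.remove[of _ a]) auto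
  qed
  have "b < Suc m" using m le_prod_encode_2 by (simp add: le_imp_less_Suc)
  then show ?thesis unfolding bm_spec P using ab by (auto intro: Least_equality[symmetric])
qed

lemma cpt_fst: "cpt k F \<Longrightarrow> cpt k (\<lambda>xs. fst (prod_decode (F xs)))"
proof -
  assume a: "cpt k F"
  have inner: "cpt (Suc (Suc k)) (\<lambda>ys. if prod_encode (ys ! 1, ys ! 0) = F (drop 2 ys) then 1 else 0)"
    by (intro cpt_ifeq cpt_pe cpt_proj cpt_drop2 a cpt_const) simp_all
  have s: "cpt (Suc k) (\<lambda>zs. \<Sum>b<Suc (F (tl zs)). if prod_encode (zs ! 0, b) = F (tl zs) then 1 else 0)"
  proof -
    have "cpt (Suc k) (\<lambda>zs. \<Sum>b<Suc (F (drop 1 zs)). (\<lambda>ys. if prod_encode (ys ! 1, ys ! 0) = F (drop 2 ys) then 1 else 0) (b # zs))"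
    proof (rule cpt_sum[OF inner])
      have "cpt (Suc k) (\<lambda>zs. F (map (\<lambda>i. zs ! i) [1..<Suc k]))" by (rule cpt_sel[OF a]) auto
      then show "cpt (Suc k) (\<lambda>zs. Suc (F (drop 1 zs)))" by (intro cpt_Suc, rule cpt_cong) (auto simp del: upt_Suc simp add: map_nth_from)
    qed
    then show ?thesis by (rule cpt_cong) (auto simp: drop_Suc)
  qed
  have "cpt k (\<lambda>xs. bm (\<lambda>j. (\<lambda>zs. \<Sum>b<Suc (F (tl zs)). if prod_encode (zs ! 0, b) = F (tl zs) then 1 else 0) (j # xs) \<noteq> (0::nat)) (Suc (F xs)))"
    using cpt_bm[OF s cpt_Suc[OF a]] by (simp only: list.sel nth_Cons_0)
  then show ?thesis unfolding fst_decode by (simp only: list.sel nth_Cons_0)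
qed

lemma cpt_snd: "cpt k F \<Longrightarrow> cpt k (\<lambda>xs. snd (prod_decode (F xs)))"
proof -
  assume a: "cpt k F"
  have inner: "cpt (Suc (Suc k)) (\<lambda>ys. if prod_encode (ys ! 0, ys ! 1) = F (drop 2 ys) then 1 else 0)"
    by (intro cpt_ifeq cpt_pe cpt_proj cpt_drop2 a cpt_const) simp_all
  have s: "cpt (Suc k) (\<lambda>zs. \<Sum>b<Suc (F (tl zs)). if prod_encode (b, zs ! 0) = F (tl zs) then 1 else 0)"
  proof -
    have "cpt (Suc k) (\<lambda>zs. \<Sum>b<Suc (F (drop 1 zs)). (\<lambda>ys. if prod_encode (ys ! 0, ys ! 1) = F (drop 2 ys) then 1 else 0) (b # zs))"
    proof (rule cpt_sum[OF inner])
      have "cpt (Suc k) (\<lambda>zs. F (map (\<lambda>i. zs ! i) [1..<Suc k]))" by (rule cpt_sel[OF a]) auto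
      then show "cpt (Suc k) (\<lambda>zs. Suc (F (drop 1 zs)))" by (intro cpt_Suc, rule cpt_cong) (auto simp del: upt_Suc simp add: map_nth_from)
    qed
    then show ?thesis by (rule cpt_cong) (auto simp: drop_Suc)
  qed
  have "cpt k (\<lambda>xs. bm (\<lambda>j. (\<lambda>zs. \<Sum>b<Suc (F (tl zs)). if prod_encode (b, zs ! 0) = F (tl zs) then 1 else 0) (j # xs) \<noteq> (0::nat)) (Suc (F xs)))"
    using cpt_bm[OF s cpt_Suc[OF a]] by (simp only: list.sel nth_Cons_0)
  then show ?thesis unfolding snd_decode by (simp only: list.sel nth_Cons_0)
qed



lemma la2_det:
  "list_all2 (\<lambda>g w. Q g w \<and> (\<forall>w'. Q g w' \<longrightarrow> w = w')) gs ws \<Longrightarrow> list_all2 Q gs ws' \<Longrightarrow> ws = ws'"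
proof (induction gs arbitrary: ws ws')
  case Nil then show ?case by simp
next
  case (Cons g gs)
  then show ?case by (auto simp: list_all2_Cons1)
qed

lemma eval_det: "eval f xs v \<Longrightarrow> eval f xs w \<Longrightarrow> v = w"
proof (induction arbitrary: w rule: eval.induct)
  case (eval_Zero xs) from eval_Zero.prems show ?case by (cases rule: eval.cases) auto
next
  case (eval_Succ x xs) from eval_Succ.prems show ?case by (cases rule: eval.cases) auto
next
  case (eval_Proj i xs) from eval_Proj.prems show ?case by (cases rule: eval.cases) auto
next
  case (eval_Comp xs gs ws f v)
  from eval_Comp.prems obtain ws' where ws': "list_all2 (\<lambda>g w. eval g xs w) gs ws'" "eval f ws' w"
    by (cases rule: eval.cases) auto
  have "ws = ws'"
    by (rule la2_det[OF _ ws'(1)]) (use eval_Comp.IH(1) in \<open>auto elim: list_all2_mono\<close>)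
  then show ?case using eval_Comp.IH(2) ws'(2) by simp
next
  case (eval_Prec0 f xs v g)
  from eval_Prec0.prems have "eval f xs w" by (cases rule: eval.cases) auto
  then show ?case using eval_Prec0.IH by simp
next
  case (eval_PrecS f g n xs u v)
  from eval_PrecS.prems obtain u' where u': "eval (Prec f g) (n # xs) u'" "eval g (n # u' # xs) w"
    by (cases rule: eval.cases) auto
  from eval_PrecS.IH(1) u'(1) have "u = u'" by simp
  with eval_PrecS.IH(2) u'(2) show ?case by simp
next
  case (eval_Minim f n xs)
  from eval_Minim.prems have w0: "eval f (w # xs) 0" and wl: "\<forall>m<w. \<exists>u. eval f (m # xs) u \<and> u > 0"
    by (cases rule: eval.cases; auto)+
  show ?case
  proof (rule ccontr)
    assume "n \<noteq> w"
    then have "n < w \<or> w < n" by arith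
    then show False
    proof
      assume "n < w"
      then obtain u where u: "eval f (n # xs) u" "u > 0" using wl by auto
      from eval_Minim.IH(1) u(1) have "0 = u" by simp
      then show False using u(2) by simp
    next
      assume "w < n"
      then obtain u where u: "eval f (w # xs) u" "\<forall>u'. eval f (w # xs) u' \<longrightarrow> u = u'" "u > 0"
        using eval_Minim.IH(2) by blast
      then have "u = 0" using w0 by simp
      then show False using u(3) by simp
    qed
  qed
qed

primrec precl :: "nat \<Rightarrow> (nat \<Rightarrow> nat \<Rightarrow> nat) \<Rightarrow> nat \<Rightarrow> nat" where
  "precl a h 0 = a"
| "precl a h (Suc n) = (if precl a h n = 0 then 0 else h n (precl a h n - 1))"

primrec ms :: "(nat \<Rightarrow> nat) \<Rightarrow> nat \<Rightarrow> nat" where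
  "ms h 0 = 0"
| "ms h (Suc t) = (if ms h t = 0 then (if h t = 0 then 1 else if h t = 1 then t + 2 else 0) else ms h t)"

definition msr :: "(nat \<Rightarrow> nat) \<Rightarrow> nat \<Rightarrow> nat" where
  "msr h t = (if 2 \<le> ms h t then ms h t - 1 else 0)"

lemma ms_zero: "ms h t = 0 \<longleftrightarrow> (\<forall>j<t. 2 \<le> h j)"
proof (induction t)
  case 0 then show ?case by simp
next
  case (Suc t)
  show ?case
  proof (cases "ms h t = 0")
    case True
    then show ?thesis using Suc by (auto simp: less_Suc_eq)
  next
    case False
    then show ?thesis using Suc by (auto simp: less_Suc_eq)
  qed
qed

lemma ms_found: "ms h t = m + 2 \<longleftrightarrow> (m < t \<and> h m = 1 \<and> (\<forall>j<m. 2 \<le> h j))"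
proof (induction t)
  case 0 then show ?case by simp
next
  case (Suc t)
  show ?case
  proof (cases "ms h t = 0")
    case True
    then have all: "\<forall>j<t. 2 \<le> h j" using ms_zero by auto
    show ?thesis
    proof
      assume a: "ms h (Suc t) = m + 2"
      then have "h t = 1" "m = t" using True by (auto split: if_splits)
      then show "m < Suc t \<and> h m = 1 \<and> (\<forall>j<m. 2 \<le> h j)" using all by auto
    next
      assume a: "m < Suc t \<and> h m = 1 \<and> (\<forall>j<m. 2 \<le> h j)"
      have "m = t"
      proof (rule ccontr)
        assume "m \<noteq> t"
        then have "m < t" using a by auto
        then have "2 \<le> h m" using all by auto
        then show False using a by simp
      qed
      then show "ms h (Suc t) = m + 2" using a True by simp
    qed
  next
    case False
    then have "\<not> (\<forall>j<t. 2 \<le> h j)" using ms_zero by auto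
    then have "(m < Suc t \<and> h m = 1 \<and> (\<forall>j<m. 2 \<le> h j)) \<longleftrightarrow> (m < t \<and> h m = 1 \<and> (\<forall>j<m. 2 \<le> h j))"
      by (auto simp: less_Suc_eq)
    then show ?thesis using False Suc by simp
  qed
qed

lemma msr_Suc: "msr h t = Suc m \<longleftrightarrow> (m < t \<and> h m = 1 \<and> (\<forall>j<m. 2 \<le> h j))"
proof -
  have "msr h t = Suc m \<longleftrightarrow> ms h t = m + 2" unfolding msr_def by auto
  then show ?thesis using ms_found by simp
qed

fun bnd :: "recf \<Rightarrow> nat \<Rightarrow> nat list \<Rightarrow> nat" where
  "bnd Zero t xs = 1"
| "bnd Succ t xs = (case xs of [] \<Rightarrow> 0 | x # _ \<Rightarrow> Suc (Suc x))"
| "bnd (Proj i) t xs = (if i < length xs then Suc (xs ! i) else 0)"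
| "bnd (Comp f gs) t xs = (if 0 \<notin> set (map (\<lambda>g. bnd g t xs) gs) then bnd f t (map (\<lambda>g. bnd g t xs - 1) gs) else 0)"
| "bnd (Prec f g) t xs = (case xs of [] \<Rightarrow> 0 | n # ys \<Rightarrow> precl (bnd f t ys) (\<lambda>i r. bnd g t (i # r # ys)) n)"
| "bnd (Minim f) t xs = msr (\<lambda>m. bnd f t (m # xs)) t"


lemma la2_map_self: "list_all2 P gs (map h gs) \<longleftrightarrow> (\<forall>g\<in>set gs. P g (h g))"
  by (induction gs) auto

lemma bnd_sound: "bnd f t xs = Suc v \<Longrightarrow> eval f xs v"
proof (induction f arbitrary: xs v)
  case Zero then show ?case by (auto intro: eval.intros)
next
  case Succ then show ?case by (auto intro: eval.intros split: list.splits)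
next
  case (Proj i) then show ?case by (auto intro: eval.intros split: if_splits)
next
  case (Comp f gs)
  from Comp.prems have nz: "0 \<notin> set (map (\<lambda>g. bnd g t xs) gs)"
    and fv: "bnd f t (map (\<lambda>g. bnd g t xs - 1) gs) = Suc v"
    by (auto split: if_splits)
  have "eval f (map (\<lambda>g. bnd g t xs - 1) gs) v" using Comp.IH(1) fv by simp
  moreover have "list_all2 (\<lambda>g w. eval g xs w) gs (map (\<lambda>g. bnd g t xs - 1) gs)"
    unfolding la2_map_self
  proof
    fix g assume g: "g \<in> set gs"
    then have "bnd g t xs \<noteq> 0" using nz by auto
    then have "bnd g t xs = Suc (bnd g t xs - 1)" by simp
    then show "eval g xs (bnd g t xs - 1)" using Comp.IH(2)[OF g] by blast
  qed
  ultimately show ?case by (auto intro: eval.intros)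
next
  case (Prec f g)
  then obtain n ys where xs: "xs = n # ys" by (auto split: list.splits)
  have "\<forall>v. precl (bnd f t ys) (\<lambda>i r. bnd g t (i # r # ys)) n = Suc v \<longrightarrow> eval (Prec f g) (n # ys) v" for n
  proof (induction n)
    case 0 then show ?case using Prec.IH(1) by (auto intro: eval.intros)
  next
    case (Suc n)
    show ?case
    proof (intro allI impI)
      fix v assume a: "precl (bnd f t ys) (\<lambda>i r. bnd g t (i # r # ys)) (Suc n) = Suc v"
      have "precl (bnd f t ys) (\<lambda>i r. bnd g t (i # r # ys)) n \<noteq> 0" using a by (auto split: if_splits)
      then obtain u where u: "precl (bnd f t ys) (\<lambda>i r. bnd g t (i # r # ys)) n = Suc u"
        using not0_implies_Suc by blast
      with a have "bnd g t (n # u # ys) = Suc v" by simp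
      then have "eval g (n # u # ys) v" using Prec.IH(2) by blast
      moreover have "eval (Prec f g) (n # ys) u" using Suc.IH u by blast
      ultimately show "eval (Prec f g) (Suc n # ys) v" by (auto intro: eval.intros)
    qed
  qed
  then show ?case using Prec.prems xs by simp
next
  case (Minim f)
  from Minim.prems have a: "msr (\<lambda>m. bnd f t (m # xs)) t = Suc v" by simp
  then have v1: "bnd f t (v # xs) = Suc 0" and lt: "\<forall>j<v. 2 \<le> bnd f t (j # xs)"
    unfolding msr_Suc by auto
  have "eval f (v # xs) 0" using Minim.IH v1 by blast
  moreover have "\<forall>m<v. \<exists>w. eval f (m # xs) w \<and> w > 0"
  proof (intro allI impI)
    fix m assume "m < v"
    then have "2 \<le> bnd f t (m # xs)" using lt by auto
    then have "bnd f t (m # xs) = Suc (bnd f t (m # xs) - 1)" "bnd f t (m # xs) - 1 > 0" by auto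
    then show "\<exists>w. eval f (m # xs) w \<and> w > 0" using Minim.IH by blast
  qed
  ultimately show ?case by (auto intro: eval.intros)
qed

lemma bnd_mono: "bnd f t xs = Suc v \<Longrightarrow> t \<le> t' \<Longrightarrow> bnd f t' xs = Suc v"
proof (induction f arbitrary: xs v)
  case Zero then show ?case by simp
next
  case Succ then show ?case by simp
next
  case (Proj i) then show ?case by simp
next
  case (Comp f gs)
  from Comp.prems have nz: "0 \<notin> set (map (\<lambda>g. bnd g t xs) gs)"
    and fv: "bnd f t (map (\<lambda>g. bnd g t xs - 1) gs) = Suc v"
    by (auto split: if_splits)
  have eq: "bnd g t' xs = bnd g t xs" if "g \<in> set gs" for g
  proof -
    have "bnd g t xs \<noteq> 0" using nz that by auto
    then have s: "bnd g t xs = Suc (bnd g t xs - 1)" by simp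
    from Comp.IH(2)[OF that s Comp.prems(2)] s show ?thesis by simp
  qed
  then have m1: "map (\<lambda>g. bnd g t' xs) gs = map (\<lambda>g. bnd g t xs) gs"
    and m2: "map (\<lambda>g. bnd g t' xs - 1) gs = map (\<lambda>g. bnd g t xs - 1) gs" by auto
  have f': "bnd f t' (map (\<lambda>g. bnd g t xs - 1) gs) = Suc v" using Comp.IH(1)[OF fv Comp.prems(2)] .
  show ?case unfolding bnd.simps m1 m2 using nz f' by simp
next
  case (Prec f g)
  then obtain n ys where xs: "xs = n # ys" by (auto split: list.splits)
  have "\<forall>v. precl (bnd f t ys) (\<lambda>i r. bnd g t (i # r # ys)) n = Suc v \<longrightarrow>
     precl (bnd f t' ys) (\<lambda>i r. bnd g t' (i # r # ys)) n = Suc v" for n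
  proof (induction n)
    case 0 then show ?case using Prec.IH(1) Prec.prems(2) by auto
  next
    case (Suc n)
    show ?case
    proof (intro allI impI)
      fix v assume a: "precl (bnd f t ys) (\<lambda>i r. bnd g t (i # r # ys)) (Suc n) = Suc v"
      have "precl (bnd f t ys) (\<lambda>i r. bnd g t (i # r # ys)) n \<noteq> 0" using a by (auto split: if_splits)
      then obtain u where u: "precl (bnd f t ys) (\<lambda>i r. bnd g t (i # r # ys)) n = Suc u"
        using not0_implies_Suc by blast
      with a have "bnd g t (n # u # ys) = Suc v" by simp
      then have "bnd g t' (n # u # ys) = Suc v" using Prec.IH(2) Prec.prems(2) by blast
      moreover have "precl (bnd f t' ys) (\<lambda>i r. bnd g t' (i # r # ys)) n = Suc u" using Suc.IH u by blast
      ultimately show "precl (bnd f t' ys) (\<lambda>i r. bnd g t' (i # r # ys)) (Suc n) = Suc v" by simp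
    qed
  qed
  then show ?case using Prec.prems xs by simp
next
  case (Minim f)
  from Minim.prems have a: "msr (\<lambda>m. bnd f t (m # xs)) t = Suc v" by simp
  then have v1: "bnd f t (v # xs) = Suc 0" and lt: "\<forall>j<v. 2 \<le> bnd f t (j # xs)" and vt: "v < t"
    unfolding msr_Suc by auto
  have "bnd f t' (v # xs) = Suc 0" using Minim.IH v1 Minim.prems(2) by blast
  moreover have "\<forall>j<v. 2 \<le> bnd f t' (j # xs)"
  proof (intro allI impI)
    fix m assume "m < v"
    then have "2 \<le> bnd f t (m # xs)" using lt by auto
    then have s: "bnd f t (m # xs) = Suc (bnd f t (m # xs) - 1)" by auto
    from Minim.IH[OF s Minim.prems(2)] s have "bnd f t' (m # xs) = bnd f t (m # xs)" by simp
    then show "2 \<le> bnd f t' (m # xs)" using \<open>2 \<le> bnd f t (m # xs)\<close> by simp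
  qed
  ultimately have "msr (\<lambda>m. bnd f t' (m # xs)) t' = Suc v"
    unfolding msr_Suc using vt Minim.prems(2) by auto
  then show ?case by simp
qed

definition hb :: "recf \<Rightarrow> nat list \<Rightarrow> nat \<Rightarrow> nat \<Rightarrow> bool" where
  "hb f xs v T \<longleftrightarrow> (\<forall>t\<ge>T. bnd f t xs = Suc v)"

lemma hb_I: "bnd f t xs = Suc v \<Longrightarrow> hb f xs v t"
  unfolding hb_def using bnd_mono by blast

lemma hb_mono: "hb f xs v T \<Longrightarrow> T \<le> T' \<Longrightarrow> hb f xs v T'"
  unfolding hb_def by auto

lemma la2_fuel:
  "list_all2 (\<lambda>g w. \<exists>t. bnd g t xs = Suc w) gs ws \<Longrightarrow> \<exists>T. list_all2 (\<lambda>g w. hb g xs w T) gs ws"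
proof (induction gs arbitrary: ws)
  case Nil then show ?case by simp
next
  case (Cons g gs)
  then obtain w ws' where ws: "ws = w # ws'" and t: "\<exists>t. bnd g t xs = Suc w"
    and r: "list_all2 (\<lambda>g w. \<exists>t. bnd g t xs = Suc w) gs ws'"
    by (auto simp: list_all2_Cons1)
  from Cons.IH[OF r] obtain T where T: "list_all2 (\<lambda>g w. hb g xs w T) gs ws'" by blast
  from t obtain t where "bnd g t xs = Suc w" by blast
  then have "hb g xs w (max t T)" by (rule hb_mono[OF hb_I]) simp
  moreover have "list_all2 (\<lambda>g w. hb g xs w (max t T)) gs ws'"
    using T by (rule list_all2_mono) (auto elim: hb_mono)
  ultimately show ?case using ws by auto
qed

lemma la2_map_eq: "list_all2 (\<lambda>g w. h g = Suc w) gs ws \<Longrightarrow> map h gs = map Suc ws"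
proof (induction gs arbitrary: ws)
  case Nil then show ?case by simp
next
  case (Cons g gs) then show ?case by (auto simp: list_all2_Cons1)
qed

lemma fuel_bound: "(\<forall>m<(n::nat). \<exists>t::nat. P m t) \<Longrightarrow> (\<And>m t t'. P m t \<Longrightarrow> t \<le> t' \<Longrightarrow> P m t') \<Longrightarrow>
  \<exists>T. \<forall>m<n. P m T"
proof (induction n)
  case 0 then show ?case by simp
next
  case (Suc n)
  then obtain T where T: "\<forall>m<n. P m T" by auto
  from Suc.prems obtain t where t: "P n t" by auto
  have "\<forall>m<Suc n. P m (max T t)"
  proof (intro allI impI)
    fix m assume "m < Suc n"
    then have "m < n \<or> m = n" by auto
    then show "P m (max T t)"
    proof
      assume "m < n" then have "P m T" using T by blast
      then show ?thesis using Suc.prems(2)[of m T "max T t"] by simp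
    next
      assume "m = n" then show ?thesis using t Suc.prems(2)[of m t "max T t"] by auto
    qed
  qed
  then show ?case by blast
qed

lemma bnd_complete: "eval f xs v \<Longrightarrow> \<exists>t. bnd f t xs = Suc v"
proof (induction rule: eval.induct)
  case (eval_Zero xs) then show ?case by simp
next
  case (eval_Succ x xs) then show ?case by simp
next
  case (eval_Proj i xs) then show ?case by simp
next
  case (eval_Comp xs gs ws f v)
  have "list_all2 (\<lambda>g w. \<exists>t. bnd g t xs = Suc w) gs ws"
    using eval_Comp.IH(1) by (rule list_all2_mono) auto
  from la2_fuel[OF this] obtain T where T: "list_all2 (\<lambda>g w. hb g xs w T) gs ws" by blast
  from eval_Comp.IH(2) obtain tf where tf: "bnd f tf ws = Suc v" by blast
  let ?T = "max T tf"
  have "list_all2 (\<lambda>g w. bnd g ?T xs = Suc w) gs ws"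
    using T by (rule list_all2_mono) (auto simp: hb_def)
  then have m: "map (\<lambda>g. bnd g ?T xs) gs = map Suc ws" by (rule la2_map_eq)
  have "map (\<lambda>g. bnd g ?T xs - 1) gs = map (\<lambda>x. x - 1) (map (\<lambda>g. bnd g ?T xs) gs)" by simp
  also have "\<dots> = ws" unfolding m by (simp add: o_def)
  finally have "map (\<lambda>g. bnd g ?T xs - 1) gs = ws" .
  moreover have "0 \<notin> set (map (\<lambda>g. bnd g ?T xs) gs)" using m by auto
  moreover have "bnd f ?T ws = Suc v" using bnd_mono[OF tf] by simp
  ultimately show ?case by (intro exI[of _ ?T]) simp
next
  case (eval_Prec0 f xs v g)
  then show ?case by simp
next
  case (eval_PrecS f g n xs u v)
  from eval_PrecS.IH(1) obtain t1 where t1: "bnd (Prec f g) t1 (n # xs) = Suc u" by blast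
  from eval_PrecS.IH(2) obtain t2 where t2: "bnd g t2 (n # u # xs) = Suc v" by blast
  have a: "bnd (Prec f g) (max t1 t2) (n # xs) = Suc u" by (rule bnd_mono[OF t1]) simp
  have b: "bnd g (max t1 t2) (n # u # xs) = Suc v" by (rule bnd_mono[OF t2]) simp
  show ?case using a b by (intro exI[of _ "max t1 t2"]) simp
next
  case (eval_Minim f n xs)
  from eval_Minim.IH(1) obtain t0 where t0: "bnd f t0 (n # xs) = Suc 0" by blast
  have "\<forall>m<n. \<exists>t. \<exists>w. w > 0 \<and> bnd f t (m # xs) = Suc w"
    using eval_Minim.IH(2) by blast
  then have "\<forall>m<n. \<exists>t. \<exists>w. w > 0 \<and> hb f (m # xs) w t"
    using hb_I by blast
  from fuel_bound[OF this] obtain T where T: "\<forall>m<n. \<exists>w. w > 0 \<and> hb f (m # xs) w T"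
    using hb_mono by blast
  let ?T = "max (max T t0) (Suc n)"
  have "bnd f ?T (n # xs) = Suc 0" by (rule bnd_mono[OF t0]) simp
  moreover have "\<forall>j<n. 2 \<le> bnd f ?T (j # xs)"
  proof (intro allI impI)
    fix j assume "j < n"
    then obtain w where "w > 0" "hb f (j # xs) w T" using T by blast
    then show "2 \<le> bnd f ?T (j # xs)" unfolding hb_def by auto
  qed
  ultimately have "msr (\<lambda>m. bnd f ?T (m # xs)) ?T = Suc n" unfolding msr_Suc by auto
  then show ?case by (intro exI[of _ ?T]) simp
qed

lemma bnd_iff: "(\<exists>v. eval f xs v) \<longleftrightarrow> (\<exists>t. bnd f t xs \<noteq> 0)"
proof
  assume "\<exists>v. eval f xs v"
  then obtain v t where "bnd f t xs = Suc v" using bnd_complete by blast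
  then have "bnd f t xs \<noteq> 0" by simp
  then show "\<exists>t. bnd f t xs \<noteq> 0" by blast
next
  assume "\<exists>t. bnd f t xs \<noteq> 0"
  then obtain t where "bnd f t xs \<noteq> 0" by blast
  then obtain v where "bnd f t xs = Suc v" using not0_implies_Suc by blast
  then show "\<exists>v. eval f xs v" using bnd_sound by blast
qed



lemma cpt_prodlist: "\<forall>F\<in>set Fs. cpt k F \<Longrightarrow> cpt k (\<lambda>xs. prod_list (map (\<lambda>F. F xs) Fs))"
proof (induction Fs)
  case Nil then show ?case by (simp add: cpt_const)
next
  case (Cons F Fs) then show ?case by (simp add: cpt_mult)
qed

lemma cpt_hd: "cpt (Suc k) (\<lambda>ys. hd ys)"
  by (rule cpt_cong[OF cpt_proj[of 0 "Suc k"]]) (auto simp: length_Suc_conv)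

lemma cpt_bnd: "cpt (Suc k) (\<lambda>ys. bnd f (hd ys) (tl ys))"
proof (induction f arbitrary: k)
  case Zero
  show ?case by (rule cpt_cong[OF cpt_const[of _ 1]]) simp
next
  case Succ
  show ?case
  proof (cases k)
    case 0
    show ?thesis by (rule cpt_cong[OF cpt_zero]) (auto simp: 0 length_Suc_conv)
  next
    case (Suc k')
    have "cpt (Suc k) (\<lambda>ys. Suc (Suc (ys ! 1)))" by (intro cpt_Suc cpt_proj) (simp add: Suc)
    then show ?thesis by (rule cpt_cong) (auto simp: Suc length_Suc_conv)
  qed
next
  case (Proj i)
  show ?case
  proof (cases "i < k")
    case True
    have "cpt (Suc k) (\<lambda>ys. Suc (ys ! Suc i))" by (intro cpt_Suc cpt_proj) (simp add: True)
    then show ?thesis by (rule cpt_cong) (use True in \<open>auto simp: length_Suc_conv\<close>)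
  next
    case False
    show ?thesis by (rule cpt_cong[OF cpt_zero]) (use False in \<open>auto simp: length_Suc_conv\<close>)
  qed
next
  case (Comp f gs)
  have Gs: "\<forall>F\<in>set (map (\<lambda>g ys. bnd g (hd ys) (tl ys)) gs). cpt (Suc k) F"
    using Comp.IH(2) by auto
  have A: "cpt (Suc k) (\<lambda>ys. prod_list (map (\<lambda>F. F ys) (map (\<lambda>g ys. bnd g (hd ys) (tl ys)) gs)))"
    by (rule cpt_prodlist[OF Gs])
  have R: "cpt (Suc k) (\<lambda>ys. (\<lambda>zs. bnd f (hd zs) (tl zs))
     (map (\<lambda>F. F ys) ((\<lambda>ys. hd ys) # map (\<lambda>g ys. bnd g (hd ys) (tl ys) - 1) gs)))"
  proof (rule cpt_compose[OF Comp.IH(1)])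
    show "length ((\<lambda>ys. hd ys) # map (\<lambda>g ys. bnd g (hd ys) (tl ys) - 1) gs) = Suc (length gs)" by simp
    show "\<forall>F\<in>set ((\<lambda>ys. hd ys) # map (\<lambda>g ys. bnd g (hd ys) (tl ys) - 1) gs). cpt (Suc k) F"
      using Comp.IH(2) by (auto intro: cpt_hd cpt_sub cpt_const)
  qed
  have "cpt (Suc k) (\<lambda>ys. if prod_list (map (\<lambda>F. F ys) (map (\<lambda>g ys. bnd g (hd ys) (tl ys)) gs)) = 0 then 0 else
     (\<lambda>zs. bnd f (hd zs) (tl zs)) (map (\<lambda>F. F ys) ((\<lambda>ys. hd ys) # map (\<lambda>g ys. bnd g (hd ys) (tl ys) - 1) gs)))"
    by (rule cpt_if[OF A cpt_zero R])
  then show ?case by (rule cpt_cong) (simp add: o_def prod_list_zero_iff)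
next
  case (Prec f g)
  show ?case
  proof (cases k)
    case 0
    show ?thesis by (rule cpt_cong[OF cpt_zero]) (auto simp: 0 length_Suc_conv)
  next
    case (Suc k')
    let ?K = "Suc (Suc k')"
    have F0: "cpt ?K (\<lambda>ys. bnd f (ys ! 0) (drop 2 ys))"
    proof -
      have "cpt ?K (\<lambda>ys. (\<lambda>zs. bnd f (hd zs) (tl zs)) (map (\<lambda>i. ys ! i) (0 # [2..<?K])))"
        by (rule cpt_sel[OF Prec.IH(1)]) auto
      then show ?thesis by (rule cpt_cong) (simp del: upt_Suc add: map_nth_from)
    qed
    have Gq: "cpt (Suc (Suc ?K)) (\<lambda>qs. (\<lambda>zs. bnd g (hd zs) (tl zs))
        (map (\<lambda>F. F qs) ([\<lambda>qs. qs ! 2, \<lambda>qs. qs ! 0, \<lambda>qs. qs ! 1 - 1] @ map (\<lambda>i qs. qs ! i) [4..<Suc (Suc ?K)])))"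
    proof (rule cpt_compose[OF Prec.IH(2)[of "Suc (Suc k')"]])
      show "length ([\<lambda>qs. qs ! 2, \<lambda>qs. qs ! 0, \<lambda>qs. qs ! 1 - 1] @ map (\<lambda>i qs. qs ! i) [4..<Suc (Suc ?K)]) = Suc (Suc (Suc k'))"
        by (simp del: upt_Suc)
      show "\<forall>F\<in>set ([\<lambda>qs. qs ! 2, \<lambda>qs. qs ! 0, \<lambda>qs. qs ! 1 - 1] @ map (\<lambda>i qs. qs ! i) [4..<Suc (Suc ?K)]). cpt (Suc (Suc ?K)) F"
        by (auto simp del: upt_Suc intro!: cpt_proj cpt_sub cpt_const)
    qed
    have S: "cpt (Suc (Suc ?K)) (\<lambda>qs. if qs ! 1 = 0 then 0 else bnd g (qs ! 2) (qs ! 0 # (qs ! 1 - 1) # drop 4 qs))"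
    proof -
      have "cpt (Suc (Suc ?K)) (\<lambda>qs. if qs ! 1 = 0 then 0 else (\<lambda>zs. bnd g (hd zs) (tl zs))
        (map (\<lambda>F. F qs) ([\<lambda>qs. qs ! 2, \<lambda>qs. qs ! 0, \<lambda>qs. qs ! 1 - 1] @ map (\<lambda>i qs. qs ! i) [4..<Suc (Suc ?K)])))"
        by (rule cpt_if[OF cpt_proj cpt_zero Gq]) simp
      then show ?thesis by (rule cpt_cong) (simp del: upt_Suc add: o_def map_nth_from)
    qed
    have I: "cpt ?K (\<lambda>ys. PR (\<lambda>ys. bnd f (ys ! 0) (drop 2 ys))
        (\<lambda>qs. if qs ! 1 = 0 then 0 else bnd g (qs ! 2) (qs ! 0 # (qs ! 1 - 1) # drop 4 qs)) (ys ! 1) ys)"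
      by (rule cpt_iter[OF F0 S cpt_proj]) simp
    have PReq: "PR (\<lambda>ys. bnd f (ys ! 0) (drop 2 ys))
        (\<lambda>qs. if qs ! 1 = 0 then 0 else bnd g (qs ! 2) (qs ! 0 # (qs ! 1 - 1) # drop 4 qs)) n ys
      = precl (bnd f (ys ! 0) (drop 2 ys)) (\<lambda>i r. bnd g (ys ! 0) (i # r # drop 2 ys)) n" for n ys
      by (induction n) simp_all
    show ?thesis
      using I unfolding Suc
    proof (rule cpt_cong)
      fix ys :: "nat list" assume "length ys = Suc (Suc k')"
      then obtain t n zs where ys: "ys = t # n # zs" by (auto simp: length_Suc_conv)
      show "PR (\<lambda>ys. bnd f (ys ! 0) (drop 2 ys))
        (\<lambda>qs. if qs ! 1 = 0 then 0 else bnd g (qs ! 2) (qs ! 0 # (qs ! 1 - 1) # drop 4 qs)) (ys ! 1) ys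
        = bnd (Prec f g) (hd ys) (tl ys)"
        unfolding PReq by (simp add: ys)
    qed
  qed
next
  case (Minim f)
  let ?Q = "Suc (Suc (Suc k))"
  have Fq: "cpt ?Q (\<lambda>qs. bnd f (qs ! 2) (qs ! 0 # drop 3 qs))"
  proof -
    have "cpt ?Q (\<lambda>qs. (\<lambda>zs. bnd f (hd zs) (tl zs)) (map (\<lambda>i. qs ! i) (2 # 0 # [3..<?Q])))"
      by (rule cpt_sel[OF Minim.IH[of "Suc k"]]) auto
    then show ?thesis by (rule cpt_cong) (simp del: upt_Suc add: map_nth_from)
  qed
  have S: "cpt ?Q (\<lambda>qs. if qs ! 1 = 0 then
      (if bnd f (qs ! 2) (qs ! 0 # drop 3 qs) = 0 then 1
       else if bnd f (qs ! 2) (qs ! 0 # drop 3 qs) = 1 then qs ! 0 + 2 else 0) else qs ! 1)"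
    by (intro cpt_if cpt_ifeq cpt_proj Fq cpt_const cpt_add) simp_all
  have PReq: "PR (\<lambda>_. 0) (\<lambda>qs. if qs ! 1 = 0 then
      (if bnd f (qs ! 2) (qs ! 0 # drop 3 qs) = 0 then 1
       else if bnd f (qs ! 2) (qs ! 0 # drop 3 qs) = 1 then qs ! 0 + 2 else 0) else qs ! 1) n ys
     = ms (\<lambda>m. bnd f (ys ! 0) (m # drop 1 ys)) n" for n ys
    by (induction n) simp_all
  have I: "cpt (Suc k) (\<lambda>ys. PR (\<lambda>_. 0) (\<lambda>qs. if qs ! 1 = 0 then
      (if bnd f (qs ! 2) (qs ! 0 # drop 3 qs) = 0 then 1
       else if bnd f (qs ! 2) (qs ! 0 # drop 3 qs) = 1 then qs ! 0 + 2 else 0) else qs ! 1) (ys ! 0) ys)"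
    by (rule cpt_iter[OF cpt_zero S cpt_proj]) simp
  have "cpt (Suc k) (\<lambda>ys. if 2 \<le> ms (\<lambda>m. bnd f (ys ! 0) (m # drop 1 ys)) (ys ! 0)
      then ms (\<lambda>m. bnd f (ys ! 0) (m # drop 1 ys)) (ys ! 0) - 1 else 0)"
    using cpt_ifle[OF cpt_const I cpt_sub[OF I cpt_const] cpt_zero] unfolding PReq .
  then show ?case
  proof (rule cpt_cong)
    fix ys :: "nat list" assume "length ys = Suc k"
    then obtain t zs where ys: "ys = t # zs" by (auto simp: length_Suc_conv)
    show "(if 2 \<le> ms (\<lambda>m. bnd f (ys ! 0) (m # drop 1 ys)) (ys ! 0)
      then ms (\<lambda>m. bnd f (ys ! 0) (m # drop 1 ys)) (ys ! 0) - 1 else 0) = bnd (Minim f) (hd ys) (tl ys)"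
      by (simp add: ys msr_def)
  qed
qed



section \<open>Strings as numbers\<close>

lemma enc_Cons: "enc (b # xs) = 2 * enc xs + (if b then 2 else 1)" by simp

lemma enc_eq0: "enc xs = 0 \<longleftrightarrow> xs = []"
  by (cases xs) auto

lemma enc_ge_len: "length xs \<le> enc xs"
  by (induction xs) auto

lemma enc_inj: "enc xs = enc ys \<Longrightarrow> xs = ys"
proof (induction xs arbitrary: ys)
  case Nil then show ?case using enc_eq0[of ys] by simp
next
  case (Cons a xs)
  then obtain b ys' where ys: "ys = b # ys'" by (cases ys) (auto split: if_splits)
  from Cons.prems ys have "2 * enc xs + (if a then 2 else 1) = 2 * enc ys' + (if b then 2 else 1)" by simp
  then have "a = b" "enc xs = enc ys'" by (auto split: if_splits) presburger+
  then show ?case using Cons.IH ys by simp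
qed

lemma enc_surj: "\<exists>xs. enc xs = n"
proof (induction n rule: less_induct)
  case (less n)
  show ?case
  proof (cases "n = 0")
    case True then show ?thesis by (intro exI[of _ "[]"]) simp
  next
    case False
    show ?thesis
    proof (cases "even n")
      case True
      define m where "m = (n - 2) div 2"
      have m: "n = 2 * m + 2" unfolding m_def using True False by presburger
      then have "m < n" by simp
      then obtain xs where "enc xs = m" using less.IH by blast
      then show ?thesis using m by (intro exI[of _ "True # xs"]) simp
    next
      case odd: False
      define m where "m = (n - 1) div 2"
      have m: "n = 2 * m + 1" unfolding m_def using odd by presburger
      then have "m < n" by simp
      then obtain xs where "enc xs = m" using less.IH by blast
      then show ?thesis using m by (intro exI[of _ "False # xs"]) simp
    qed
  qed
qed

definition dec :: "nat \<Rightarrow> bits" where "dec n = (SOME xs. enc xs = n)"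

lemma enc_dec[simp]: "enc (dec n) = n"
  unfolding dec_def using enc_surj by (rule someI_ex)

lemma dec_enc[simp]: "dec (enc xs) = xs"
  using enc_inj enc_dec by blast

section \<open>Machines from programs\<close>

definition mach :: "recf \<Rightarrow> bits \<Rightarrow> bits option" where
  "mach P w = (if \<exists>v. eval P [enc w] v then Some (dec (THE v. eval P [enc w] v)) else None)"

lemma mach_eval: "eval P [enc w] v \<Longrightarrow> mach P w = Some (dec v)"
proof -
  assume e: "eval P [enc w] v"
  then have "(THE v. eval P [enc w] v) = v" using eval_det by blast
  then show ?thesis using e unfolding mach_def by auto
qed

lemma mach_pc: "partial_computable (mach P)"
  unfolding partial_computable_def
proof (intro exI[of _ P] allI)
  fix x v
  show "eval P [enc x] v \<longleftrightarrow> (\<exists>z. mach P x = Some z \<and> v = enc z)"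
  proof
    assume "eval P [enc x] v"
    then show "\<exists>z. mach P x = Some z \<and> v = enc z" using mach_eval by fastforce
  next
    assume "\<exists>z. mach P x = Some z \<and> v = enc z"
    then obtain z where z: "mach P x = Some z" "v = enc z" by blast
    then obtain v' where v': "eval P [enc x] v'" unfolding mach_def by (auto split: if_splits)
    then have "z = dec v'" using mach_eval z by simp
    then show "eval P [enc x] v" using v' z by simp
  qed
qed

lemma total_prog: "cpt 1 F \<Longrightarrow> \<exists>P. \<forall>W. eval P [W] (F [W])"
proof -
  assume "cpt 1 F"
  then obtain f where f: "rf 1 f F" unfolding cpt_def by blast
  have "eval f [W] (F [W])" for W using f unfolding rf_def by simp
  then show ?thesis by blast
qed

lemma min_prog:
  assumes "cpt 2 G" "cpt 2 H"
  shows "\<exists>P. \<forall>W m. G [m, W] = 0 \<longrightarrow> (\<forall>m'<m. G [m', W] \<noteq> 0) \<longrightarrow> eval P [W] (H [m, W])"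
proof -
  obtain g h where g: "rf 2 g G" and h: "rf 2 h H" using assms cpt_def by auto
  have "eval (Comp h [Minim g, Proj 0]) [W] (H [m, W])"
    if "G [m, W] = 0" "\<forall>m'<m. G [m', W] \<noteq> 0" for W m
  proof (rule eval_Comp)
    have "eval (Minim g) [W] m"
    proof (rule eval_Minim)
      have ge: "eval g [a, W] (G [a, W])" for a using g unfolding rf_def by simp
      show "eval g [m, W] 0" using ge[of m] that(1) by simp
      show "\<forall>m'<m. \<exists>w. eval g [m', W] w \<and> w > 0"
        using ge that(2) by blast
    qed
    moreover have "eval (Proj 0) [W] W" using eval_Proj[of 0 "[W]"] by simp
    ultimately show "list_all2 (\<lambda>g w. eval g [W] w) [Minim g, Proj 0] [m, W]" by simp
    show "eval h [m, W] (H [m, W])" using h unfolding rf_def by simp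
  qed
  then show ?thesis by blast
qed

definition tlf :: "nat \<Rightarrow> nat" where "tlf u = (u - 1) div 2"

definition itl :: "nat \<Rightarrow> nat \<Rightarrow> nat" where "itl k u = (tlf ^^ k) u"

lemma tlf_enc: "tlf (enc xs) = enc (tl xs)"
  by (cases xs) (auto simp: tlf_def)

lemma itl_enc: "itl k (enc xs) = enc (drop k xs)"
proof (induction k)
  case 0 then show ?case by (simp add: itl_def)
next
  case (Suc k)
  then have "itl (Suc k) (enc xs) = tlf (enc (drop k xs))" by (simp add: itl_def)
  also have "\<dots> = enc (drop (Suc k) xs)" by (simp add: tlf_enc drop_Suc tl_drop)
  finally show ?case .
qed

lemma bit_at: "k < length xs \<Longrightarrow> enc (drop k xs) \<noteq> 0 \<and> (enc (drop k xs) mod 2 = 0 \<longleftrightarrow> xs ! k)"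
proof -
  assume "k < length xs"
  then have "drop k xs = xs ! k # drop (Suc k) xs" by (rule Cons_nth_drop_Suc[symmetric])
  then show ?thesis by simp
qed

lemma past_end: "length xs \<le> k \<Longrightarrow> enc (drop k xs) = 0"
  by simp

lemma PR_itl: "PR U (\<lambda>ys. (ys ! 1 - 1) div 2) n xs = itl n (U xs)"
  by (induction n) (simp_all add: itl_def tlf_def)

lemma cpt_itl: "cpt k K \<Longrightarrow> cpt k U \<Longrightarrow> cpt k (\<lambda>xs. itl (K xs) (U xs))"
proof -
  assume a: "cpt k K" "cpt k U"
  have "cpt (Suc (Suc k)) (\<lambda>ys. (ys ! 1 - 1) div 2)" by (intro cpt_div2 cpt_sub cpt_proj cpt_const) simp
  from cpt_iter[OF a(2) this a(1)] show ?thesis unfolding PR_itl .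
qed

section \<open>Parsing\<close>

definition patf :: "nat \<Rightarrow> nat \<Rightarrow> nat" where
  "patf W j = (if itl (2 * j) W = 0 then 0 else if itl (2 * j) W mod 2 = 0 then 0
     else if itl (Suc (2 * j)) W = 0 then 0 else if itl (Suc (2 * j)) W mod 2 = 0 then 1 else 0)"

definition Lf :: "nat \<Rightarrow> nat" where "Lf W = bm (\<lambda>j. patf W j \<noteq> 0) W"
definition eyf :: "nat \<Rightarrow> nat" where "eyf W = itl (2 * Lf W + 2) W"
definition ixf :: "nat \<Rightarrow> nat" where
  "ixf W = (\<Sum>i<Lf W. (if itl (2 * i) W mod 2 = 0 then 1 else 0) * 2 ^ i)"
definition ezf :: "nat \<Rightarrow> nat" where
  "ezf W = (\<Sum>i<Lf W. (if itl (2 * i) W mod 2 = 0 then 2 else 1) * 2 ^ i)"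

definition bval :: "bits \<Rightarrow> nat" where
  "bval z = (\<Sum>i<length z. (if z ! i then 1 else 0) * 2 ^ i)"

lemma bval_Cons: "bval (b # z) = (if b then 1 else 0) + 2 * bval z"
  unfolding bval_def length_Cons sum.lessThan_Suc_shift
  by (simp add: sum_distrib_left mult.assoc mult.left_commute)

lemma enc_sum: "enc z = (\<Sum>i<length z. (if z ! i then 2 else 1) * 2 ^ i)"
proof (induction z)
  case Nil then show ?case by simp
next
  case (Cons b z)
  show ?case unfolding length_Cons sum.lessThan_Suc_shift enc_Cons Cons.IH
    by (simp add: sum_distrib_left mult.assoc mult.left_commute)
qed

lemma bval_surj: "ix < 2 ^ L \<Longrightarrow> \<exists>z. length z = L \<and> bval z = ix"
proof (induction L arbitrary: ix)
  case 0 then show ?case by (intro exI[of _ "[]"]) (simp add: bval_def)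
next
  case (Suc L)
  then have "ix div 2 < 2 ^ L" by simp
  then obtain z where z: "length z = L" "bval z = ix div 2" using Suc.IH by blast
  have "bval (odd ix # z) = ix" unfolding bval_Cons z by simp
  then show ?case using z by (intro exI[of _ "odd ix # z"]) simp
qed

lemma dbl_len: "length (concat (map (\<lambda>b. [b, b]) z)) = 2 * length z"
  by (induction z) auto

lemma dbl_nth: "i < length z \<Longrightarrow> concat (map (\<lambda>b. [b, b]) z) ! (2 * i) = z ! i \<and>
  concat (map (\<lambda>b. [b, b]) z) ! Suc (2 * i) = z ! i"
proof (induction z arbitrary: i)
  case Nil then show ?case by simp
next
  case (Cons b z)
  show ?case
  proof (cases i)
    case 0 then show ?thesis by simp
  next
    case (Suc i')
    then have "i' < length z" using Cons.prems by simp
    then show ?thesis using Cons.IH Suc by (simp add: nth_append)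
  qed
qed

lemma spair_len: "length (spair z y) = 2 * length z + 2 + length y"
  unfolding spair_def by (simp add: dbl_len)

lemma spair_pair: "i < length z \<Longrightarrow> spair z y ! (2 * i) = z ! i \<and> spair z y ! Suc (2 * i) = z ! i"
  unfolding spair_def using dbl_nth[of i z] by (simp add: nth_append dbl_len)

lemma spair_sep: "spair z y ! (2 * length z) = False \<and> spair z y ! Suc (2 * length z) = True"
  unfolding spair_def by (simp add: nth_append dbl_len)

lemma spair_drop: "drop (2 * length z + 2) (spair z y) = y"
  unfolding spair_def by (simp add: dbl_len)

lemma patf_spair:
  assumes W: "W = enc (spair z y)"
  shows "patf W j \<noteq> 0 \<longleftrightarrow> (Suc (2 * j) < length (spair z y) \<and> \<not> spair z y ! (2 * j) \<and> spair z y ! Suc (2 * j))"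
proof -
  let ?w = "spair z y"
  show ?thesis
  proof (cases "Suc (2 * j) < length ?w")
    case True
    then have "2 * j < length ?w" by simp
    then show ?thesis using True bit_at[of "2 * j" ?w] bit_at[of "Suc (2 * j)" ?w]
      unfolding patf_def W itl_enc by auto
  next
    case False
    then have "itl (Suc (2 * j)) W = 0" unfolding W itl_enc by simp
    then show ?thesis using False unfolding patf_def by auto
  qed
qed

lemma Lf_spair: "Lf (enc (spair z y)) = length z"
proof -
  let ?w = "spair z y"
  let ?P = "\<lambda>j. patf (enc ?w) j \<noteq> 0"
  have PL: "?P (length z)"
    unfolding patf_spair[OF refl] using spair_sep[of z y] spair_len[of z y] by simp
  have nP: "\<not> ?P j" if "j < length z" for j
    unfolding patf_spair[OF refl] using spair_pair[OF that, of y] by auto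
  have lt: "length z < enc ?w" using enc_ge_len[of ?w] spair_len[of z y] by simp
  have least: "(LEAST j. ?P j) = length z"
    by (rule Least_equality) (use PL nP not_less in blast)+
  show ?thesis unfolding Lf_def bm_spec using PL lt least by auto
qed

lemma parse_spair:
  assumes W: "W = enc (spair z y)"
  shows "Lf W = length z" "eyf W = enc y" "ixf W = bval z" "ezf W = enc z"
proof -
  let ?w = "spair z y"
  show L: "Lf W = length z" using Lf_spair W by simp
  show "eyf W = enc y" unfolding eyf_def W itl_enc Lf_spair using spair_drop by simp
  have bit: "itl (2 * i) W mod 2 = 0 \<longleftrightarrow> z ! i" if "i < length z" for i
  proof -
    have "2 * i < length ?w" using that spair_len[of z y] by simp
    then show ?thesis unfolding W itl_enc using bit_at[of "2 * i" ?w] spair_pair[OF that, of y] by simp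
  qed
  show "ixf W = bval z" unfolding ixf_def bval_def L
    by (rule sum.cong) (simp_all add: bit)
  show "ezf W = enc z" unfolding ezf_def enc_sum[of z] L
    by (rule sum.cong) (simp_all add: bit)
qed

lemma cpt_tl: "cpt k F \<Longrightarrow> cpt (Suc k) (\<lambda>ys. F (tl ys))"
proof -
  assume a: "cpt k F"
  have "cpt (Suc k) (\<lambda>ys. F (map (\<lambda>i. ys ! i) [1..<Suc k]))" by (rule cpt_sel[OF a]) auto
  then show ?thesis by (rule cpt_cong) (simp del: upt_Suc add: map_nth_from drop_Suc)
qed

lemma cpt_double: "cpt k F \<Longrightarrow> cpt k (\<lambda>xs. 2 * F xs)"
proof -
  assume a: "cpt k F"
  have "cpt k (\<lambda>xs. F xs + F xs)" by (intro cpt_add a)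
  then show ?thesis by (rule cpt_cong) simp
qed

lemma cpt_patf: "cpt k W \<Longrightarrow> cpt k J \<Longrightarrow> cpt k (\<lambda>xs. patf (W xs) (J xs))"
  unfolding patf_def
  by (intro cpt_if cpt_itl cpt_double cpt_Suc cpt_mod2 cpt_const cpt_zero)

lemma cpt_Lf: "cpt k W \<Longrightarrow> cpt k (\<lambda>xs. Lf (W xs))"
proof -
  assume a: "cpt k W"
  have "cpt (Suc k) (\<lambda>ys. patf (W (tl ys)) (ys ! 0))" by (intro cpt_patf cpt_tl a cpt_proj) simp
  from cpt_bm[OF this a] show ?thesis unfolding Lf_def by simp
qed

lemma cpt_eyf: "cpt k W \<Longrightarrow> cpt k (\<lambda>xs. eyf (W xs))"
  unfolding eyf_def by (intro cpt_itl cpt_add cpt_double cpt_Lf cpt_const)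

lemma cpt_ixf: "cpt k W \<Longrightarrow> cpt k (\<lambda>xs. ixf (W xs))"
proof -
  assume a: "cpt k W"
  have "cpt (Suc k) (\<lambda>ys. (if itl (2 * ys ! 0) (W (tl ys)) mod 2 = 0 then 1 else 0) * 2 ^ (ys ! 0))"
    by (intro cpt_mult cpt_if cpt_mod2 cpt_itl cpt_double cpt_proj cpt_tl a cpt_const cpt_pow2) simp_all
  from cpt_sum[OF this cpt_Lf[OF a]] show ?thesis unfolding ixf_def by simp
qed

lemma cpt_ezf: "cpt k W \<Longrightarrow> cpt k (\<lambda>xs. ezf (W xs))"
proof -
  assume a: "cpt k W"
  have "cpt (Suc k) (\<lambda>ys. (if itl (2 * ys ! 0) (W (tl ys)) mod 2 = 0 then 2 else 1) * 2 ^ (ys ! 0))"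
    by (intro cpt_mult cpt_if cpt_mod2 cpt_itl cpt_double cpt_proj cpt_tl a cpt_const cpt_pow2) simp_all
  from cpt_sum[OF this cpt_Lf[OF a]] show ?thesis unfolding ezf_def by simp
qed

lemma Tid_exists: "\<exists>T. partial_computable T \<and> (\<forall>z y. T (spair z y) = Some z)"
proof -
  have "cpt 1 (\<lambda>xs. ezf (xs ! 0))" by (intro cpt_ezf cpt_proj) simp
  then obtain P where P: "\<forall>W. eval P [W] (ezf ([W] ! 0))" using total_prog by blast
  have "mach P (spair z y) = Some z" for z y
    using P[rule_format, of "enc (spair z y)"] parse_spair(4)[OF refl] mach_eval by fastforce
  then show ?thesis using mach_pc by blast
qed



definition Hf :: "recf \<Rightarrow> nat \<Rightarrow> nat \<Rightarrow> nat \<Rightarrow> nat \<Rightarrow> nat" where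
  "Hf p D W a s = bnd p s [prod_encode (a, prod_encode (eyf W, Lf W - D))]"

definition accf :: "recf \<Rightarrow> nat \<Rightarrow> nat \<Rightarrow> nat \<Rightarrow> nat" where
  "accf p D W m = (if Hf p D W (fst (prod_decode m)) (snd (prod_decode m)) = 0 then 0
     else if snd (prod_decode m) = 0 then 1
     else if Hf p D W (fst (prod_decode m)) (snd (prod_decode m) - 1) = 0 then 1 else 0)"

definition Gf :: "recf \<Rightarrow> nat \<Rightarrow> nat \<Rightarrow> nat \<Rightarrow> nat" where
  "Gf p D W m = (if accf p D W m = 1 then (if (\<Sum>i<m. accf p D W i) = ixf W then 0 else 1) else 1)"

lemma cpt_Hf: "cpt k W \<Longrightarrow> cpt k A \<Longrightarrow> cpt k S \<Longrightarrow> cpt k (\<lambda>xs. Hf p D (W xs) (A xs) (S xs))"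
proof -
  assume a: "cpt k W" "cpt k A" "cpt k S"
  have c: "cpt k (\<lambda>xs. prod_encode (A xs, prod_encode (eyf (W xs), Lf (W xs) - D)))"
    by (intro cpt_pe cpt_eyf cpt_sub cpt_Lf cpt_const a)
  have b: "cpt 2 (\<lambda>ys. bnd p (hd ys) (tl ys))" using cpt_bnd[of 1 p] by (simp add: numeral_2_eq_2)
  have "cpt k (\<lambda>xs. bnd p (S xs) [prod_encode (A xs, prod_encode (eyf (W xs), Lf (W xs) - D))])"
    using cpt_c2[OF b a(3) c] by simp
  then show ?thesis unfolding Hf_def .
qed

lemma cpt_accf: "cpt k W \<Longrightarrow> cpt k M \<Longrightarrow> cpt k (\<lambda>xs. accf p D (W xs) (M xs))"
  unfolding accf_def
  by (intro cpt_if cpt_Hf cpt_fst cpt_snd cpt_sub cpt_const cpt_zero) assumption+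

lemma cpt_Gf: "cpt 2 (\<lambda>xs. Gf p D (xs ! 1) (xs ! 0))"
proof -
  have s: "cpt 2 (\<lambda>xs. \<Sum>i<xs ! 0. accf p D (xs ! 1) i)"
  proof -
    have "cpt (Suc 2) (\<lambda>ys. accf p D (ys ! 2) (ys ! 0))" by (intro cpt_accf cpt_proj) simp_all
    from cpt_sum[OF this cpt_proj[of 0 2]] show ?thesis by simp
  qed
  have "cpt 2 (\<lambda>xs. if accf p D (xs ! 1) (xs ! 0) = 1 then
     (if (\<Sum>i<xs ! 0. accf p D (xs ! 1) i) = ixf (xs ! 1) then 0 else 1) else 1)"
    by (intro cpt_ifeq cpt_accf cpt_proj s cpt_ixf cpt_const cpt_zero) simp_all
  then show ?thesis unfolding Gf_def .
qed

lemma hard_prog: "\<exists>P. \<forall>W m. Gf p D W m = 0 \<longrightarrow> (\<forall>m'<m. Gf p D W m' \<noteq> 0) \<longrightarrow> eval P [W] (fst (prod_decode m))"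
proof -
  have "cpt 2 (\<lambda>xs. fst (prod_decode (xs ! 0)))" by (intro cpt_fst cpt_proj) simp
  from min_prog[OF cpt_Gf this] show ?thesis by simp
qed

lemma sum_ind_card: "(\<Sum>i<(m::nat). if P i then 1 else 0) = card {i. i < m \<and> P i}"
proof (induction m)
  case 0 then show ?case by simp
next
  case (Suc m)
  have e: "{i. i < Suc m \<and> P i} = {i. i < m \<and> P i} \<union> (if P m then {m} else {})" by (auto simp: less_Suc_eq)
  show ?case unfolding e using Suc by (simp add: card_Un_disjoint)
qed

lemma hard_main:
  fixes B :: "bits \<Rightarrow> bits \<Rightarrow> nat" and p :: recf
  assumes pce: "\<forall>c. c \<in> {prod_encode (enc x, prod_encode (enc y, k)) | x y k. B x y \<le> k} \<longleftrightarrow> (\<exists>v. eval p [c] v)"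
    and fin: "finite {x. B x y \<le> n}"
    and card: "card {x. B x y \<le> n} \<le> 2 ^ (n + D)"
    and P: "\<forall>W m. Gf p D W m = 0 \<longrightarrow> (\<forall>m'<m. Gf p D W m' \<noteq> 0) \<longrightarrow> eval P [W] (fst (prod_decode m))"
    and x0: "B x0 y \<le> n"
  shows "\<exists>z. length z = n + D \<and> eval P [enc (spair z y)] (enc x0)"
proof -
  define Hc where "Hc a s \<longleftrightarrow> bnd p s [prod_encode (a, prod_encode (enc y, n))] \<noteq> 0" for a s
  have mem: "(\<exists>s. Hc a s) \<longleftrightarrow> B (dec a) y \<le> n" for a
  proof -
    let ?c = "prod_encode (a, prod_encode (enc y, n))"
    have "?c \<in> {prod_encode (enc x, prod_encode (enc y, k)) | x y k. B x y \<le> k} \<longleftrightarrow> B (dec a) y \<le> n"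
    proof
      assume "?c \<in> {prod_encode (enc x, prod_encode (enc y, k)) | x y k. B x y \<le> k}"
      then obtain x' y' k where e: "?c = prod_encode (enc x', prod_encode (enc y', k))" "B x' y' \<le> k" by blast
      then have "a = enc x'" "enc y = enc y'" "n = k" by auto
      then have "dec a = x'" "y = y'" using enc_inj by auto
      then show "B (dec a) y \<le> n" using e \<open>n = k\<close> by simp
    next
      assume "B (dec a) y \<le> n"
      then show "?c \<in> {prod_encode (enc x, prod_encode (enc y, k)) | x y k. B x y \<le> k}"
        by (intro CollectI exI[of _ "dec a"] exI[of _ y] exI[of _ n]) simp
    qed
    then show ?thesis using pce bnd_iff unfolding Hc_def by blast
  qed
  have mono: "Hc a s \<Longrightarrow> s \<le> s' \<Longrightarrow> Hc a s'" for a s s'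
    unfolding Hc_def using bnd_mono by (metis not0_implies_Suc nat.distinct(1))
  define acc where "acc m \<longleftrightarrow> Hc (fst (prod_decode m)) (snd (prod_decode m)) \<and>
     (snd (prod_decode m) = 0 \<or> \<not> Hc (fst (prod_decode m)) (snd (prod_decode m) - 1))" for m
  define S where "S = {x. B x y \<le> n}"
  define mx where "mx x = prod_encode (enc x, LEAST s. Hc (enc x) s)" for x
  have acc_iff: "acc m \<longleftrightarrow> m \<in> mx ` S" for m
  proof
    assume a: "acc m"
    obtain a0 s where m: "prod_decode m = (a0, s)" by force
    then have H: "Hc a0 s" and lst: "s = 0 \<or> \<not> Hc a0 (s - 1)" using a unfolding acc_def by auto
    then have inS: "dec a0 \<in> S" using mem unfolding S_def by blast
    have "(LEAST s. Hc a0 s) = s"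
    proof (rule Least_equality)
      show "Hc a0 s" by (rule H)
      fix s' assume "Hc a0 s'"
      show "s \<le> s'"
      proof (rule ccontr)
        assume "\<not> s \<le> s'"
        then have "s' \<le> s - 1" "s \<noteq> 0" by auto
        then show False using mono[OF \<open>Hc a0 s'\<close>] lst by blast
      qed
    qed
    then have "mx (dec a0) = m" unfolding mx_def using m prod_decode_inverse[of m] by simp
    then show "m \<in> mx ` S" using inS by blast
  next
    assume "m \<in> mx ` S"
    then obtain x where x: "x \<in> S" "m = mx x" by blast
    then have ex: "\<exists>s. Hc (enc x) s" using mem[of "enc x"] unfolding S_def by simp
    let ?s = "LEAST s. Hc (enc x) s"
    have H: "Hc (enc x) ?s" using LeastI_ex[OF ex] .
    have "?s = 0 \<or> \<not> Hc (enc x) (?s - 1)"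
      using not_less_Least[of "?s - 1" "Hc (enc x)"] by (cases ?s) auto
    then show "acc m" using H x unfolding acc_def mx_def by simp
  qed
  have finS: "finite S" using fin unfolding S_def .
  have x0S: "x0 \<in> S" using x0 unfolding S_def by simp
  define m0 where "m0 = mx x0"
  define ix0 where "ix0 = card {i. i < m0 \<and> acc i}"
  have "{i. i < m0 \<and> acc i} \<subseteq> mx ` S - {m0}" using acc_iff by auto
  moreover have "m0 \<in> mx ` S" unfolding m0_def using x0S by blast
  ultimately have "ix0 < card (mx ` S)" unfolding ix0_def
    by (metis (no_types, lifting) finS finite_imageI card_Diff1_less card_mono finite_Diff le_less_trans)
  also have "\<dots> \<le> card S" using finS by (rule card_image_le)
  also have "\<dots> \<le> 2 ^ (n + D)" using card unfolding S_def .
  finally have "ix0 < 2 ^ (n + D)" .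
  then obtain z where z: "length z = n + D" "bval z = ix0" using bval_surj by blast
  define W where "W = enc (spair z y)"
  note ps = parse_spair[OF W_def]
  have Hf_eq: "Hf p D W a s \<noteq> 0 \<longleftrightarrow> Hc a s" for a s
    unfolding Hf_def Hc_def ps z by simp
  have Hf_eq0: "Hf p D W a s = 0 \<longleftrightarrow> \<not> Hc a s" for a s using Hf_eq by blast
  have accf_eq: "accf p D W m = (if acc m then 1 else 0)" for m
    unfolding accf_def acc_def by (simp add: Hf_eq0)
  have cnt: "(\<Sum>i<m. accf p D W i) = card {i. i < m \<and> acc i}" for m
    unfolding accf_eq by (rule sum_ind_card)
  have G: "Gf p D W m = 0 \<longleftrightarrow> acc m \<and> card {i. i < m \<and> acc i} = ix0" for m
    unfolding Gf_def cnt ps z accf_eq by simp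
  have acc0: "acc m0" using acc_iff x0S unfolding m0_def by blast
  have G0: "Gf p D W m0 = 0" using G acc0 ix0_def by simp
  have Glt: "\<forall>m'<m0. Gf p D W m' \<noteq> 0"
  proof (intro allI impI)
    fix m' assume lt: "m' < m0"
    show "Gf p D W m' \<noteq> 0"
    proof
      assume "Gf p D W m' = 0"
      then have am: "acc m'" and cm: "card {i. i < m' \<and> acc i} = ix0" using G by auto
      have "{i. i < m' \<and> acc i} \<subset> {i. i < m0 \<and> acc i}" using lt am by auto
      then have "card {i. i < m' \<and> acc i} < card {i. i < m0 \<and> acc i}"
        by (rule psubset_card_mono[rotated]) simp
      then show False using cm ix0_def by simp
    qed
  qed
  have "eval P [W] (fst (prod_decode m0))" using P G0 Glt by blast
  then have "eval P [W] (enc x0)" unfolding m0_def mx_def by simp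
  then show ?thesis using z(1) W_def by blast
qed


theorem theorem5:
  fixes U :: "bits \<Rightarrow> bits option" and B :: "bits \<Rightarrow> bits \<Rightarrow> nat"
  assumes U: "optimal_machine U"
    and h1: "upper_semicomputable B"
    and h2: "\<exists>c::nat. \<forall>x y. B x y \<le> length x + c"
    and h3: "\<exists>d::nat. \<forall>y n. finite {x. B x y \<le> n} \<and> card {x. B x y \<le> n} \<le> d * 2 ^ n"
    and h4: "\<exists>e::nat. \<forall>x y. B (spair x y) y \<le> B x y + e"
    and h5: "\<forall>f. partial_computable f \<longrightarrow>
               (\<exists>cf::nat. \<forall>x y z. f x = Some z \<longrightarrow> B z y \<le> B x y + cf)"
  shows "\<exists>c'::nat. \<forall>x y. \<bar>int (B x y) - int (condC U x y)\<bar> \<le> int c'"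
proof -
  obtain c where hc: "\<forall>x y. B x y \<le> length x + c" using h2 by blast
  obtain d where hd: "\<forall>y n. finite {x. B x y \<le> n} \<and> card {x. B x y \<le> n} \<le> d * 2 ^ n" using h3 by blast
  obtain e where he: "\<forall>x y. B (spair x y) y \<le> B x y + e" using h4 by blast
  have Upc: "partial_computable U" and opt: "\<And>T. partial_computable T \<Longrightarrow> (\<exists>c::nat. \<forall>x y z. T (spair z y) = Some x \<longrightarrow>
        (\<exists>z'. U (spair z' y) = Some x \<and> length z' \<le> length z + c))"
    using U unfolding optimal_machine_def by blast+
  obtain cU where hU: "\<forall>x y z. U x = Some z \<longrightarrow> B z y \<le> B x y + cU" using h5 Upc by blast
  obtain T0 where T0: "partial_computable T0" "\<forall>z y. T0 (spair z y) = Some z" using Tid_exists by blast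
  obtain c0 where c0: "\<forall>x y z. T0 (spair z y) = Some x \<longrightarrow> (\<exists>z'. U (spair z' y) = Some x \<and> length z' \<le> length z + c0)"
    using opt[OF T0(1)] by blast
  have desc: "\<exists>z. U (spair z y) = Some x" for x y using c0 T0(2) by blast
  obtain p where pce: "\<forall>n. n \<in> {prod_encode (enc x, prod_encode (enc y, k)) | x y k. B x y \<le> k} \<longleftrightarrow> (\<exists>v. eval p [n] v)"
    using h1 unfolding upper_semicomputable_def ce_def by blast
  obtain P where P: "\<forall>W m. Gf p d W m = 0 \<longrightarrow> (\<forall>m'<m. Gf p d W m' \<noteq> 0) \<longrightarrow> eval P [W] (fst (prod_decode m))"
    using hard_prog by blast
  obtain c1 where c1: "\<forall>x y z. mach P (spair z y) = Some x \<longrightarrow> (\<exists>z'. U (spair z' y) = Some x \<and> length z' \<le> length z + c1)"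
    using opt[OF mach_pc] by blast
  have up: "B x y \<le> condC U x y + (c + e + cU)" for x y
  proof -
    let ?Q = "\<lambda>n. \<exists>z. U (spair z y) = Some x \<and> length z = n"
    have "\<exists>n. ?Q n" using desc by blast
    from LeastI_ex[OF this] obtain z0 where z0: "U (spair z0 y) = Some x" "length z0 = condC U x y"
      unfolding condC_def by blast
    have "B x y \<le> B (spair z0 y) y + cU" using hU z0(1) by blast
    also have "\<dots> \<le> B z0 y + e + cU" using he by simp
    also have "\<dots> \<le> length z0 + c + e + cU" using hc by simp
    finally show ?thesis using z0(2) by simp
  qed
  have lo: "condC U x y \<le> B x y + (d + c1)" for x y
  proof -
    let ?n = "B x y"
    have fin: "finite {x'. B x' y \<le> ?n}" using hd by blast
    have "card {x'. B x' y \<le> ?n} \<le> d * 2 ^ ?n" using hd by blast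
    also have "\<dots> \<le> 2 ^ d * 2 ^ ?n" using less_exp[of d] by simp
    also have "\<dots> = 2 ^ (?n + d)" by (simp add: power_add)
    finally have card: "card {x'. B x' y \<le> ?n} \<le> 2 ^ (?n + d)" .
    obtain z where z: "length z = ?n + d" "eval P [enc (spair z y)] (enc x)"
      using hard_main[OF pce fin card P order_refl] by blast
    then have "mach P (spair z y) = Some x" using mach_eval by fastforce
    then obtain z' where z': "U (spair z' y) = Some x" "length z' \<le> length z + c1" using c1 by blast
    have "condC U x y \<le> length z'" unfolding condC_def using z'(1) by (intro Least_le) blast
    then show ?thesis using z z' by simp
  qed
  show ?thesis
  proof (intro exI[of _ "(c + e + cU) + (d + c1)"] allI)
    fix x y
    show "\<bar>int (B x y) - int (condC U x y)\<bar> \<le> int ((c + e + cU) + (d + c1))"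
      using up[of x y] lo[of x y] by linarith
  qed
qed

end
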